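(* Let $\Gamma\in\mathbb{R}^{n\times m}$ and let $R:\mathbb{R}^n_{\ge0}\to\mathbb{R}^m$ be locally Lipschitz such that $\dot S=\Gamma R(S)$ leaves $\mathbb{R}^n_{\ge0}$ invariant and is forward complete; fix $\sigma\in\mathbb{R}^n_{\ge0}$ and consider $\dot x=R(\sigma+\Gamma x)$ on $X_\sigma=\{x\in\mathbb{R}^m:\sigma+\Gamma x\ge0\}$. Suppose $\Gamma$ has rank exactly $m-1$, with kernel spanned by a unit vector $v$ all of whose entries are positive. Let $x(t)$, $t\ge0$, be a solution of $\dot x=R(\sigma+\Gamma x)$ and $\pi_v(x)=x-(v'x)v$. Then $\Gamma x(t)$ is bounded if and only if $\pi_v x(t)$ is bounded.
   Context: Inequalities between vectors are componentwise; prime denotes transpose. *)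

theory Defs
  imports "HOL-Analysis.Analysis"
begin

definition nonneg_orthant :: "(real^'n) set" where
  "nonneg_orthant = {S. \<forall>i. 0 \<le> S $ i}"

definition locally_lipschitz_on :: "('a::metric_space) set \<Rightarrow> ('a \<Rightarrow> 'b::metric_space) \<Rightarrow> bool" where
  "locally_lipschitz_on D f \<longleftrightarrow>
     (\<forall>x\<in>D. \<exists>u>0. \<exists>L. L-lipschitz_on (cball x u \<inter> D) f)"

definition invariant_forward_complete :: "real^'m^'n \<Rightarrow> (real^'n \<Rightarrow> real^'m) \<Rightarrow> bool" where
  "invariant_forward_complete \<Gamma> R \<longleftrightarrow>
     (\<forall>S0\<in>nonneg_orthant. \<exists>S::real \<Rightarrow> real^'n. S 0 = S0 \<and>
        (\<forall>t\<ge>0. S t \<in> nonneg_orthant \<and>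
           (S has_vector_derivative (\<Gamma> *v R (S t))) (at t within {0..})))"

definition X_sigma :: "real^'m^'n \<Rightarrow> real^'n \<Rightarrow> (real^'m) set" where
  "X_sigma \<Gamma> \<sigma> = {x. \<sigma> + \<Gamma> *v x \<in> nonneg_orthant}"

definition proj_v :: "real^'m \<Rightarrow> real^'m \<Rightarrow> real^'m" where
  "proj_v v x = x - (v \<bullet> x) *\<^sub>R v"

end

theory Submission
  imports Defs
begin

theorem lemma5:
  fixes \<Gamma> :: "real^'m^'n"
    and R :: "real^'n \<Rightarrow> real^'m"
    and \<sigma> :: "real^'n"
    and v :: "real^'m"
    and x :: "real \<Rightarrow> real^'m"
  assumes R_lip: "locally_lipschitz_on nonneg_orthant R"
    and inv_compl: "invariant_forward_complete \<Gamma> R"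
    and sigma_nonneg: "\<sigma> \<in> nonneg_orthant"
    and rank_Gamma: "rank \<Gamma> = CARD('m) - 1"
    and kernel: "{y. \<Gamma> *v y = 0} = span {v}"
    and v_unit: "norm v = 1"
    and v_pos: "\<forall>i. 0 < v $ i"
    and x_in: "\<forall>t\<ge>0. x t \<in> X_sigma \<Gamma> \<sigma>"
    and x_sol: "\<forall>t\<ge>0. (x has_vector_derivative R (\<sigma> + \<Gamma> *v x t)) (at t within {0..})"
  shows "bounded ((\<lambda>t. \<Gamma> *v x t) ` {0..}) \<longleftrightarrow> bounded ((\<lambda>t. proj_v v (x t)) ` {0..})"
proof -
  have vv: "v \<bullet> v = 1" using v_unit by (simp add: norm_eq_sqrt_inner)
  have Gv: "\<Gamma> *v v = 0" using kernel span_base[of v "{v}"] by blast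
  have eqG: "\<Gamma> *v proj_v v z = \<Gamma> *v z" for z
    by (simp add: proj_v_def matrix_vector_right_distrib matrix_vector_mult_diff_distrib
        matrix_vector_mult_scaleR Gv)
  have orth: "v \<bullet> proj_v v z = 0" for z
    by (simp add: proj_v_def inner_diff_right vv)
  define s where "s = {y::real^'m. v \<bullet> y = 0}"
  have s: "closed s" "subspace s"
    unfolding s_def by (auto simp: closed_hyperplane subspace_def inner_add_right)
  have bl: "bounded_linear (\<lambda>y. \<Gamma> *v y)"
    by (simp add: matrix_vector_mul_bounded_linear)
  have inj: "\<forall>y\<in>s. \<Gamma> *v y = 0 \<longrightarrow> y = 0"
  proof (intro ballI impI)
    fix y assume "y \<in> s" "\<Gamma> *v y = 0"
    then have "y \<in> span {v}" using kernel by blast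
    then obtain c where "y = c *\<^sub>R v" by (auto simp: span_singleton)
    with \<open>y \<in> s\<close> vv show "y = 0" by (simp add: s_def)
  qed
  obtain e where e: "e > 0" "\<forall>y\<in>s. norm (\<Gamma> *v y) \<ge> e * norm y"
    using injective_imp_isometric[OF s bl inj] by blast
  show ?thesis
  proof
    assume "bounded ((\<lambda>t. \<Gamma> *v x t) ` {0..})"
    then obtain B where B: "\<forall>t\<in>{0..}. norm (\<Gamma> *v x t) \<le> B"
      by (auto simp: bounded_iff)
    show "bounded ((\<lambda>t. proj_v v (x t)) ` {0..})"
      unfolding bounded_iff
    proof (intro exI ballI)
      fix w assume "w \<in> (\<lambda>t. proj_v v (x t)) ` {0..}"
      then obtain t where t: "t \<in> {0..}" "w = proj_v v (x t)" by auto
      have "w \<in> s" using t orth by (simp add: s_def)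
      then have "e * norm w \<le> norm (\<Gamma> *v w)" using e by auto
      also have "\<dots> \<le> B" using B t eqG by auto
      finally show "norm w \<le> B / e" using e by (simp add: field_simps)
    qed
  next
    assume "bounded ((\<lambda>t. proj_v v (x t)) ` {0..})"
    then have "bounded ((\<lambda>y. \<Gamma> *v y) ` ((\<lambda>t. proj_v v (x t)) ` {0..}))"
      using bounded_linear_image bl by blast
    then show "bounded ((\<lambda>t. \<Gamma> *v x t) ` {0..})"
      by (simp add: image_image eqG)
  qed
qed

end
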